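(* Let $f:\mathbb{R}/\mathbb{Z}\to\mathbb{Z}/2\mathbb{Z}$ be defined by $f(t)=1$ if $t\in[\tfrac18,\tfrac12)\cup[\tfrac58,\tfrac34)$ and $f(t)=0$ if $t\in[0,\tfrac18)\cup[\tfrac12,\tfrac58)\cup[\tfrac34,1)$. Let $t$ be uniformly distributed on $\mathbb{R}/\mathbb{Z}$. Then for every $k\ge1$, $$\mathbb{P}\big(f(2^kt)+f(2^{k-1}t)+\cdots+f(t)=0 \text{ in } \mathbb{Z}/2\mathbb{Z}\big)=\tfrac58.$$ In particular the sum does not become equidistributed on $\mathbb{Z}/2\mathbb{Z}$ as $k\to\infty$, even though $f$ is supported neither on a proper subgroup nor on a coset of a proper subgroup. *)

theory Defs
  imports "HOL-Analysis.Analysis"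
begin

text \<open>The function f on R/Z, represented as a 1-periodic function on the reals
  via the fractional part (representative in [0,1)), with values in Z/2Z
  represented by 0/1 :: nat (addition taken mod 2, i.e. parity).\<close>
definition fcirc :: "real \<Rightarrow> nat" where
  "fcirc t = (let s = frac t in
     if (1/8 \<le> s \<and> s < 1/2) \<or> (5/8 \<le> s \<and> s < 3/4) then 1 else 0)"

end

theory Submission
  imports Defs
begin


definition g :: "nat \<Rightarrow> nat" where
  "g m = (if m = 1 \<or> m = 2 \<or> m = 3 \<or> m = 5 then 1 else 0)"

definition G :: "nat \<Rightarrow> nat \<Rightarrow> nat" where
  "G k n = (\<Sum>i\<le>k. g ((n div 2^i) mod 8))"

lemma G_Suc: "G (Suc k) n = g (n mod 8) + G k (n div 2)"
  unfolding G_def sum.atMost_Suc_shift by (simp add: div_mult2_eq)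

lemma G_0: "G 0 n = g (n mod 8)" unfolding G_def by simp

lemma sum_group: "(\<Sum>n<a*M. h n) = (\<Sum>m<M. \<Sum>w<a. h (a*m+w)) " for h :: "nat \<Rightarrow> int"
proof (induction M)
  case 0 then show ?case by simp
next
  case (Suc M)
  have "(\<Sum>n<a*Suc M. h n) = (\<Sum>n<a*M. h n) + (\<Sum>n\<in>{a*M..<a*M+a}. h n)"
    by (simp add: sum.atLeastLessThan_concat[symmetric] lessThan_atLeast0 add.commute)
  also have "(\<Sum>n\<in>{a*M..<a*M+a}. h n) = (\<Sum>w<a. h (a*M+w))"
    using sum.shift_bounds_nat_ivl[of h 0 "a*M" a] by (simp add: lessThan_atLeast0 add.commute)
  finally show ?case using Suc by simp
qed

lemma sum_split2: "(\<Sum>m<2*M. h m) = (\<Sum>m<M. h (2*m) + h (2*m+1))" for h :: "nat \<Rightarrow> int"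
proof -
  have t: "(\<Sum>w<2. f w) = f 0 + f 1" for f :: "nat \<Rightarrow> int" by (simp add: numeral_2_eq_2)
  show ?thesis using sum_group[where a=2 and M=M and h=h] by (simp add: t)
qed

definition S :: "nat \<Rightarrow> nat \<Rightarrow> int" where
  "S k w = (\<Sum>m<2^k. (-1) ^ G k (8*m+w))"

lemma S_Suc: assumes "w < 8"
  shows "S (Suc k) w = (-1) ^ g w * (S k (w div 2) + S k (w div 2 + 4))"
proof -
  have e: "G (Suc k) (8*m+w) = g w + G k (4*m + w div 2)" for m
  proof -
    have "(8*m+w) div 2 = 4*m + w div 2" by presburger
    then show ?thesis using assms by (simp add: G_Suc)
  qed
  have "S (Suc k) w = (-1) ^ g w * (\<Sum>m<2*2^k. (-1) ^ G k (4*m + w div 2))"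
    unfolding S_def e by (simp add: power_add sum_distrib_left)
  also have "(\<Sum>m<2*2^k. (-1::int) ^ G k (4*m + w div 2)) = S k (w div 2) + S k (w div 2 + 4)"
    unfolding sum_split2 S_def sum.distrib by (simp add: algebra_simps)
  finally show ?thesis .
qed

lemma w8: "w < (8::nat) \<Longrightarrow> w=0\<or>w=1\<or>w=2\<or>w=3\<or>w=4\<or>w=5\<or>w=6\<or>w=7" by auto

lemma S_0: "w < 8 \<Longrightarrow> S 0 w = (-1) ^ g w"
  unfolding S_def by (simp add: G_0)

lemma S_1: "S 1 0 = 2" "S 1 1 = -2" "S 1 2 = 2" "S 1 3 = 2" "S 1 4 = 0" "S 1 5 = 0" "S 1 6 = 0" "S 1 7 = 0"
  by (simp_all add: S_Suc[where k=0, simplified] S_0 g_def)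

definition sg :: "nat \<Rightarrow> int" where "sg w = (if w=1\<or>w=5 then -1 else 1)"

lemma S_2: "w < 8 \<Longrightarrow> S 2 w = 2 * sg w"
proof -
  assume w: "w < 8"
  have "S 2 w = (-1)^g w * (S 1 (w div 2) + S 1 (w div 2 +4))"
    using S_Suc[OF w, of 1] by (simp add: numeral_2_eq_2)
  then show ?thesis using w8[OF w] by (auto simp: S_1 S_1[unfolded One_nat_def] g_def sg_def)
qed

lemma sum8: "(\<Sum>w<8. f w) = f 0 + f 1 + f 2 + f 3 + f 4 + f 5 + f 6 + f (7::nat)"
  by (simp add: lessThan_nat_numeral add_ac)

lemma S_ge2: "w < 8 \<Longrightarrow> S (j+2) w = 2^(j+1) * sg w"
proof (induction j arbitrary: w)
  case 0 then show ?case using S_2[of w] by (simp add: numeral_2_eq_2)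
next
  case (Suc j)
  have a: "w div 2 < 8" "w div 2 + 4 < 8" using Suc.prems by auto
  have "S (Suc j + 2) w = (-1) ^ g w * (S (j+2) (w div 2) + S (j+2) (w div 2 + 4))"
    using S_Suc[OF Suc.prems, of "j+2"] by simp
  also have "\<dots> = 2^(j+1) * ((-1) ^ g w * (sg (w div 2) + sg (w div 2 + 4)))"
    using Suc.IH[OF a(1)] Suc.IH[OF a(2)] by (simp add: algebra_simps)
  also have "(-1) ^ g w * (sg (w div 2) + sg (w div 2 + 4)) = 2 * sg w"
    using w8[OF Suc.prems] by (auto simp: g_def sg_def)
  finally show ?case by simp
qed

lemma D: assumes "k \<ge> 1" shows "(\<Sum>n<2^(k+3). (-1::int) ^ G k n) = 2^(k+1)"
proof -
  have "(\<Sum>n<2^(k+3). (-1::int) ^ G k n) = (\<Sum>n<8*2^k. (-1::int) ^ G k n)"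
    by (simp add: power_add mult.commute)
  also have "\<dots> = (\<Sum>w<8. S k w)"
    unfolding sum_group S_def by (rule sum.swap)
  also have "\<dots> = 2^(k+1)"
  proof (cases "k = 1")
    case True then show ?thesis by (simp add: sum8 S_1 S_1[unfolded One_nat_def])
  next
    case False
    then obtain j where j: "k = j+2" using assms by (metis add.commute le_Suc_ex le_antisym not_less_eq_eq one_add_one plus_1_eq_Suc)
    have "(\<Sum>w<8. S k w) = (\<Sum>w<8. 2^(j+1) * sg w)" unfolding j by (rule sum.cong) (use S_ge2 in auto)
    also have "\<dots> = 2^(j+1) * 4" by (simp add: sum8 sg_def sum_distrib_left[symmetric])
    finally show ?thesis by (simp add: j eval_nat_numeral)
  qed
  finally show ?thesis .
qed

lemma cardE: assumes "k \<ge> 1" shows "card {n\<in>{..<2^(k+3)}. even (G k n)} = 5 * 2^k"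
proof -
  define A :: "nat set" where "A = {..<2^(k+3)}"
  define B where "B = {n. even (G k n)}"
  have fA: "finite A" by (simp add: A_def)
  have "(\<Sum>n\<in>A. (-1::int) ^ G k n) = (\<Sum>n\<in>A. if n \<in> B then 1 else -1)"
    by (rule sum.cong) (auto simp: B_def)
  also have "\<dots> = int (card (A \<inter> B)) - int (card (A - B))"
    by (simp add: sum.If_cases[OF fA] Diff_eq)
  finally have 1: "int (card (A \<inter> B)) - int (card (A - B)) = 2^(k+1)"
    using D[OF assms] by (simp add: A_def)
  have 2: "card A = card (A \<inter> B) + card (A - B)" by (rule card_Int_Diff[OF fA])
  have "card A = 2^(k+3)" by (simp add: A_def)
  then have 4: "int (card A) = 8 * 2^k" by (simp add: power_add)
  have 3: "int (card (A \<inter> B)) + int (card (A - B)) = int (card A)" using 2 by simp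
  have 5: "int (card (A \<inter> B)) - int (card (A - B)) = 2 * 2^k" using 1 by simp
  have "int (card (A \<inter> B)) = 5 * 2^k" using 3 4 5 by linarith
  then have "int (card (A \<inter> B)) = int (5 * 2^k)" by simp
  then have "card (A \<inter> B) = 5 * 2^k" by (simp only: of_nat_eq_iff)
  moreover have "{n\<in>{..<2^(k+3)}. even (G k n)} = A \<inter> B" by (auto simp: A_def B_def)
  ultimately show ?thesis by simp
qed



lemma floor8: fixes y :: real shows "\<lfloor>8 * frac y\<rfloor> = \<lfloor>8*y\<rfloor> mod 8"
proof -
  have "8 * frac y = 8*y - of_int (8*\<lfloor>y\<rfloor>)" by (simp add: frac_def algebra_simps)
  then have "\<lfloor>8 * frac y\<rfloor> = \<lfloor>8*y - of_int (8*\<lfloor>y\<rfloor>)\<rfloor>" by simp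
  also have "\<dots> = \<lfloor>8*y\<rfloor> - 8*\<lfloor>y\<rfloor>" by (rule floor_diff_of_int)
  finally have a: "\<lfloor>8 * frac y\<rfloor> = \<lfloor>8*y\<rfloor> - 8*\<lfloor>y\<rfloor>" .
  have "\<lfloor>8*y / real_of_int 8\<rfloor> = \<lfloor>8*y\<rfloor> div 8" by (rule floor_divide_real_eq_div) simp
  then have b: "\<lfloor>y\<rfloor> = \<lfloor>8*y\<rfloor> div 8" by simp
  show ?thesis unfolding a b by (metis minus_div_mult_eq_mod mult.commute)
qed

lemma fcirc_g: "fcirc y = g (nat (\<lfloor>8*y\<rfloor> mod 8))"
proof -
  define sv where "sv = frac y"
  define qv where "qv = floor (8 * sv)"
  have s: "0 \<le> sv" "sv < 1" by (auto simp: sv_def frac_lt_1)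
  have q1: "of_int qv \<le> 8 * sv" "8 * sv < of_int qv + 1" by (auto simp: qv_def)
  have q2: "0 \<le> qv" "qv < 8" using q1 s by (auto simp: qv_def)
  have qe: "\<lfloor>8*y\<rfloor> mod 8 = qv" by (simp add: qv_def sv_def floor8)
  have "qv=0\<or>qv=1\<or>qv=2\<or>qv=3\<or>qv=4\<or>qv=5\<or>qv=6\<or>qv=7" using q2 by auto
  then show ?thesis unfolding qe fcirc_def Let_def sv_def[symmetric]
    using q1 by (elim disjE) (auto simp: g_def)
qed

lemma fcirc_pow:
  fixes t :: real
  assumes t: "0 \<le> t" and j: "j \<le> k"
  shows "fcirc (2^j * t) = g ((nat \<lfloor>2^(k+3) * t\<rfloor> div 2^(k-j)) mod 8)"
proof -
  define n where "n = nat \<lfloor>2^(k+3) * t\<rfloor>"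
  have fl: "\<lfloor>2^(k+3) * t\<rfloor> = int n" using t by (simp add: n_def)
  have p: "(2::real)^(k+3) = 8 * 2^j * 2^(k-j)"
  proof -
    have "k + 3 = 3 + j + (k - j)" using j by simp
    then have "(2::real)^(k+3) = 2^(3 + j + (k-j))" by (simp only:)
    also have "\<dots> = 8 * 2^j * 2^(k-j)" by (simp only: power_add) simp
    finally show ?thesis .
  qed
  have "8 * (2^j * t) = (2^(k+3) * t) / real_of_int (2^(k-j))"
    unfolding p by simp
  then have "\<lfloor>8 * (2^j * t)\<rfloor> = \<lfloor>2^(k+3) * t\<rfloor> div 2^(k-j)"
    using floor_divide_real_eq_div[of "2^(k-j)" "2^(k+3) * t"] by simp
  also have "\<dots> = int (n div 2^(k-j))" unfolding fl by (simp add: zdiv_int)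
  finally have "\<lfloor>8 * (2^j * t)\<rfloor> mod 8 = int ((n div 2^(k-j)) mod 8)"
    by (simp add: zmod_int)
  then show ?thesis unfolding fcirc_g n_def by simp
qed

lemma sum_fcirc:
  fixes t :: real
  assumes t: "0 \<le> t"
  shows "(\<Sum>j\<le>k. fcirc (2^j * t)) = G k (nat \<lfloor>2^(k+3) * t\<rfloor>)"
proof -
  define n where "n = nat \<lfloor>2^(k+3) * t\<rfloor>"
  define h where "h i = g ((n div 2^i) mod 8)" for i
  have "(\<Sum>j\<le>k. fcirc (2^j * t)) = (\<Sum>j<Suc k. h (Suc k - Suc j))"
    unfolding lessThan_Suc_atMost
    by (rule sum.cong) (auto simp: fcirc_pow[OF t] h_def n_def)
  also have "\<dots> = (\<Sum>j<Suc k. h j)" by (rule sum.nat_diff_reindex)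
  also have "\<dots> = G k n" by (simp add: G_def h_def lessThan_Suc_atMost)
  finally show ?thesis by (simp add: n_def)
qed

lemma in_I: fixes t :: real
  shows "t \<in> {real n / 2^N ..< (real n + 1) / 2^N} \<longleftrightarrow> \<lfloor>2^N * t\<rfloor> = int n"
proof -
  have "t \<in> {real n / 2^N ..< (real n + 1) / 2^N} \<longleftrightarrow> real n \<le> 2^N * t \<and> 2^N * t < real n + 1"
    by (auto simp: field_simps)
  also have "\<dots> \<longleftrightarrow> \<lfloor>2^N * t\<rfloor> = int n" by (simp add: floor_eq_iff)
  finally show ?thesis .
qed

theorem mainTheorem14:
  fixes k :: nat
  assumes "k \<ge> 1"
  shows "measure lborel {t \<in> {0..<1::real}. even (\<Sum>j\<le>k. fcirc (2 ^ j * t))} = 5 / 8"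
proof -
  define N where "N = k + 3"
  define E where "E = {n\<in>{..<2^(k+3)}. even (G k n)}"
  define I where "I n = {real n / 2^N ..< (real n + 1) / 2^N}" for n :: nat
  have eq: "{t \<in> {0..<1::real}. even (\<Sum>j\<le>k. fcirc (2 ^ j * t))} = (\<Union>n\<in>E. I n)"
  proof (intro equalityI subsetI)
    fix t assume "t \<in> {t \<in> {0..<1::real}. even (\<Sum>j\<le>k. fcirc (2 ^ j * t))}"
    then have t: "0 \<le> t" "t < 1" and ev: "even (\<Sum>j\<le>k. fcirc (2 ^ j * t))" by auto
    define n where "n = nat \<lfloor>2^N * t\<rfloor>"
    have fl: "\<lfloor>2^N * t\<rfloor> = int n" using t by (simp add: n_def)
    have "2^N * t < 2^N" using t by simp
    then have "\<lfloor>2^N * t\<rfloor> < 2^N" by (metis floor_less_iff of_int_numeral of_int_power)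
    then have "int n < int (2^N)" using fl by simp
    then have nlt: "n < 2^N" by (simp only: of_nat_less_iff)
    have "n \<in> E" using ev nlt sum_fcirc[OF t(1), of k] by (simp add: E_def n_def N_def)
    moreover have "t \<in> I n" unfolding I_def in_I by (rule fl)
    ultimately show "t \<in> (\<Union>n\<in>E. I n)" by blast
  next
    fix t assume "t \<in> (\<Union>n\<in>E. I n)"
    then obtain n where n: "n \<in> E" and tI: "t \<in> I n" by blast
    have fl: "\<lfloor>2^N * t\<rfloor> = int n" using tI unfolding I_def in_I .
    have nlt: "n < 2^N" and ev: "even (G k n)" using n by (auto simp: E_def N_def)
    have "0 \<le> real n / 2^N" by simp
    moreover have "real n / 2^N \<le> t" using tI by (simp add: I_def)
    ultimately have "0 \<le> t" by linarith
    moreover have "t < 1"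
    proof -
      have "real n + 1 \<le> 2^N" using nlt by (metis Suc_leI of_nat_Suc of_nat_le_iff of_nat_numeral of_nat_power add.commute)
      then have "(real n + 1) / 2^N \<le> 1" by simp
      moreover have "t < (real n + 1) / 2^N" using tI by (simp add: I_def)
      ultimately show ?thesis by linarith
    qed
    moreover have "even (\<Sum>j\<le>k. fcirc (2 ^ j * t))"
      using sum_fcirc[OF \<open>0 \<le> t\<close>, of k] fl ev by (simp add: N_def)
    ultimately show "t \<in> {t \<in> {0..<1::real}. even (\<Sum>j\<le>k. fcirc (2 ^ j * t))}" by auto
  qed
  have disj: "disjoint_family_on I E"
    unfolding disjoint_family_on_def I_def
    using in_I by (metis (no_types, lifting) disjoint_iff of_nat_eq_iff)
  have "measure lborel (\<Union>n\<in>E. I n) = (\<Sum>n\<in>E. measure lborel (I n))"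
    apply (rule measure_finite_Union)
       apply (simp add: E_def)
      apply (auto simp: I_def)[1]
     apply (rule disj)
    apply (auto simp: I_def divide_right_mono)
    done
  also have "\<dots> = (\<Sum>n\<in>E. 1 / 2^N)"
    by (rule sum.cong) (auto simp: I_def divide_right_mono diff_divide_distrib[symmetric])
  also have "\<dots> = real (card E) / 2^N" by simp
  also have "\<dots> = 5 / 8" using cardE[OF assms] by (simp add: E_def N_def power_add)
  finally show ?thesis unfolding eq .
qed


end
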